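(* Fix integers $N\ge 2$ and $K\ge 1$. Let $\mathcal{M}$ be any set of scoring tensors in $\mathbb{R}^{N\times N\times K}$ such that each $\mathcal{S}\in\mathcal{M}$ is the scoring tensor of a bilinear model of some size $r<N/32$, i.e. there exist $\mathbf{A}\in\mathbb{R}^{N\times r}$ and $\mathbf{R}_1,\dots,\mathbf{R}_K\in\mathbb{R}^{r\times r}$ with $[\mathcal{S}]_{ijk}=\mathbf{a}_i^T\mathbf{R}_k\mathbf{a}_j$ for all $i,j,k$. Then $\mathcal{M}$ is not universal, i.e. $\pi(\mathcal{M})\ne\pi(\mathbb{R}^{N\times N\times K})$.
   Context: For a real $N\times N$ matrix $\mathbf{S}$, $\pi(\mathbf{S})$ is the matrix of dense ranks: $\pi_{ij}(\mathbf{S})=1+$ (number of distinct values among entries of $\mathbf{S}$ strictly larger than $s_{ij}$). For a tensor in $\mathbb{R}^{N\times N\times K}$, $\pi$ is applied to each frontal slice (the $N\times N$ matrices obtained by fixing the third index); for a set $X$, $\pi(X)=\{\pi(x):x\in X\}$. $\mathbf{a}_i$ denotes the $i$-th row of $\mathbf{A}$. *)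

theory Defs
  imports "HOL-Analysis.Analysis"
begin

(* An N x N x K real tensor is represented as a function nat => nat => nat => real
   (indices i j in {0..<N}, k in {0..<K}), required to be 0 outside this box
   so that distinct functions correspond to distinct tensors. *)
definition tensors :: "nat \<Rightarrow> nat \<Rightarrow> (nat \<Rightarrow> nat \<Rightarrow> nat \<Rightarrow> real) set" where
  "tensors N K = {S. \<forall>i j k. \<not> (i < N \<and> j < N \<and> k < K) \<longrightarrow> S i j k = 0}"

definition dense_rank :: "nat \<Rightarrow> (nat \<Rightarrow> nat \<Rightarrow> real) \<Rightarrow> nat \<Rightarrow> nat \<Rightarrow> nat" where
  "dense_rank N S i j =
     1 + card {v. \<exists>a<N. \<exists>b<N. v = S a b \<and> v > S i j}"

definition rank_tensor :: "nat \<Rightarrow> nat \<Rightarrow> (nat \<Rightarrow> nat \<Rightarrow> nat \<Rightarrow> real) \<Rightarrow> (nat \<Rightarrow> nat \<Rightarrow> nat \<Rightarrow> nat)" where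
  "rank_tensor N K S = (\<lambda>i j k. if i < N \<and> j < N \<and> k < K
        then dense_rank N (\<lambda>a b. S a b k) i j else 0)"

definition bilinear_tensor :: "nat \<Rightarrow> nat \<Rightarrow> nat \<Rightarrow> (nat \<Rightarrow> nat \<Rightarrow> real)
      \<Rightarrow> (nat \<Rightarrow> nat \<Rightarrow> nat \<Rightarrow> real) \<Rightarrow> (nat \<Rightarrow> nat \<Rightarrow> nat \<Rightarrow> real)" where
  "bilinear_tensor N K r A R = (\<lambda>i j k. if i < N \<and> j < N \<and> k < K
        then (\<Sum>p<r. \<Sum>q<r. A i p * R k p q * A j q) else 0)"

definition is_bilinear_of_size :: "nat \<Rightarrow> nat \<Rightarrow> nat \<Rightarrow> (nat \<Rightarrow> nat \<Rightarrow> nat \<Rightarrow> real) \<Rightarrow> bool" where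
  "is_bilinear_of_size N K r S \<longleftrightarrow> (\<exists>A R. S = bilinear_tensor N K r A R)"

end

theory Submission
  imports Defs
begin

lemma lin_dep:
  fixes C :: "nat \<Rightarrow> nat \<Rightarrow> real"
  assumes "finite I" "m < card I"
  shows "\<exists>x. (\<exists>i\<in>I. x i \<noteq> 0) \<and> (\<forall>p<m. (\<Sum>i\<in>I. C p i * x i) = 0)"
  using assms
proof (induction m arbitrary: I C)
  case 0
  then obtain i where "i \<in> I" by fastforce
  then show ?case by (intro exI[of _ "\<lambda>_. 1"]) auto
next
  case (Suc m)
  show ?case
  proof (cases "\<forall>i\<in>I. C m i = 0")
    case True
    from Suc.IH[of I C] Suc.prems obtain x where x: "\<exists>i\<in>I. x i \<noteq> 0"
      "\<forall>p<m. (\<Sum>i\<in>I. C p i * x i) = 0" by auto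
    have "\<forall>p<Suc m. (\<Sum>i\<in>I. C p i * x i) = 0"
      using x(2) True by (auto simp: less_Suc_eq)
    then show ?thesis using x(1) by blast
  next
    case False
    then obtain i0 where i0: "i0 \<in> I" "C m i0 \<noteq> 0" by auto
    define C' where "C' p i = C p i - (C p i0 / C m i0) * C m i" for p i
    have "m < card (I - {i0})" using Suc.prems i0 by auto
    from Suc.IH[OF _ this, of C'] Suc.prems obtain y where y: "\<exists>i\<in>I-{i0}. y i \<noteq> 0"
      "\<forall>p<m. (\<Sum>i\<in>I-{i0}. C' p i * y i) = 0" by auto
    define z where "z = - (\<Sum>i\<in>I-{i0}. C m i * y i) / C m i0"
    define x where "x = y(i0 := z)"
    have sx: "(\<Sum>i\<in>I. C p i * x i) = C p i0 * z + (\<Sum>i\<in>I-{i0}. C p i * y i)" for p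
    proof -
      have "(\<Sum>i\<in>I. C p i * x i) = C p i0 * x i0 + (\<Sum>i\<in>I-{i0}. C p i * x i)"
        using i0 Suc.prems by (simp add: sum.remove)
      also have "(\<Sum>i\<in>I-{i0}. C p i * x i) = (\<Sum>i\<in>I-{i0}. C p i * y i)"
        by (rule sum.cong) (auto simp: x_def)
      finally show ?thesis by (simp add: x_def)
    qed
    have "(\<Sum>i\<in>I. C p i * x i) = 0" if "p < Suc m" for p
    proof (cases "p = m")
      case True
      then show ?thesis using sx[of m] i0 by (simp add: z_def)
    next
      case False
      then have "p < m" using that by auto
      have "(\<Sum>i\<in>I-{i0}. C' p i * y i) = (\<Sum>i\<in>I-{i0}. C p i * y i)
          - (C p i0 / C m i0) * (\<Sum>i\<in>I-{i0}. C m i * y i)"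
        by (simp add: C'_def algebra_simps sum_subtractf sum_distrib_left)
      also have "\<dots> = (\<Sum>i\<in>I-{i0}. C p i * y i) + C p i0 * z"
        using i0 by (simp add: z_def field_simps)
      finally show ?thesis using sx[of p] y(2) \<open>p < m\<close> by simp
    qed
    moreover have "\<exists>i\<in>I. x i \<noteq> 0" using y(1) by (auto simp: x_def)
    ultimately show ?thesis by blast
  qed
qed

lemma dense_rank_inj:
  fixes g :: "nat \<Rightarrow> nat \<Rightarrow> real"
  assumes "i < N" "j < N" "i' < N" "j' < N"
    and "dense_rank N g i j = dense_rank N g i' j'"
  shows "g i j = g i' j'"
proof -
  have fin: "finite {v. \<exists>a<N. \<exists>b<N. v = g a b \<and> v > t}" for t
  proof -
    have "{v. \<exists>a<N. \<exists>b<N. v = g a b \<and> v > t} \<subseteq> (\<lambda>(a,b). g a b) ` ({..<N} \<times> {..<N})"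
      by auto
    then show ?thesis by (rule finite_subset) auto
  qed
  have less: "card {v. \<exists>a<N. \<exists>b<N. v = g a b \<and> v > g i' j'}
      < card {v. \<exists>a<N. \<exists>b<N. v = g a b \<and> v > g i j}"
    if "g i j < g i' j'" "i < N" "j < N" "i' < N" "j' < N" for i j i' j'
  proof (rule psubset_card_mono[OF fin])
    show "{v. \<exists>a<N. \<exists>b<N. v = g a b \<and> v > g i' j'} \<subset> {v. \<exists>a<N. \<exists>b<N. v = g a b \<and> v > g i j}"
      using that by auto blast
  qed
  show ?thesis
  proof (rule ccontr)
    assume "g i j \<noteq> g i' j'"
    then consider "g i j < g i' j'" | "g i' j' < g i j" by linarith
    then show False
      using less[of i j i' j'] less[of i' j' i j] assms by (cases; auto simp: dense_rank_def)
  qed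
qed

theorem corollary3:
  fixes N K :: nat and M :: "(nat \<Rightarrow> nat \<Rightarrow> nat \<Rightarrow> real) set"
  assumes "N \<ge> 2" and "K \<ge> 1"
    and "\<forall>S\<in>M. \<exists>r::nat. real r < real N / 32 \<and> is_bilinear_of_size N K r S"
  shows "rank_tensor N K ` M \<noteq> rank_tensor N K ` tensors N K"
proof
  assume eq: "rank_tensor N K ` M = rank_tensor N K ` tensors N K"
  define T :: "nat \<Rightarrow> nat \<Rightarrow> nat \<Rightarrow> real" where
    "T = (\<lambda>i j k. if i < N \<and> j < N \<and> k < K then (if i = j then 1 else 0) else 0)"
  have "T \<in> tensors N K" by (simp add: T_def tensors_def)
  then have "rank_tensor N K T \<in> rank_tensor N K ` M" using eq by auto
  then obtain S where S: "S \<in> M" "rank_tensor N K S = rank_tensor N K T" by auto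
  obtain r A R where r: "real r < real N / 32" and SA: "S = bilinear_tensor N K r A R"
    using assms(3) S(1) unfolding is_bilinear_of_size_def by blast
  have rN: "r < N - 1" using r assms(1) by linarith
  define g where "g a b = S a b 0" for a b
  define t where "t a b = T a b 0" for a b
  have K0: "0 < K" using assms(2) by simp
  have dr: "dense_rank N g i j = dense_rank N t i j" if "i < N" "j < N" for i j
  proof -
    have "rank_tensor N K S i j 0 = rank_tensor N K T i j 0" using S(2) by simp
    then show ?thesis using that K0 by (simp add: rank_tensor_def g_def[abs_def] t_def[abs_def])
  qed
  have tv: "t a b = (if a = b then 1 else 0)" if "a < N" "b < N" for a b
    using that K0 by (simp add: t_def T_def)
  have set1: "{v. \<exists>a<N. \<exists>b<N. v = t a b \<and> v > 1} = {}"
    using tv by (auto split: if_splits)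
  have set0: "{v. \<exists>a<N. \<exists>b<N. v = t a b \<and> v > 0} = {1}"
  proof -
    have "0 < N" using assms(1) by simp
    show ?thesis
    proof (intro equalityI subsetI)
      fix v assume "v \<in> {v. \<exists>a<N. \<exists>b<N. v = t a b \<and> v > 0}"
      then obtain a b where "a < N" "b < N" "v = t a b" "v > 0" by auto
      then show "v \<in> {1}" using tv[of a b] by (auto split: if_splits)
    next
      fix v assume "v \<in> {1::real}"
      then show "v \<in> {v. \<exists>a<N. \<exists>b<N. v = t a b \<and> v > 0}"
        using \<open>0 < N\<close> tv[of 0 0] by auto
    qed
  qed
  have tdiag: "dense_rank N t i i = 1" if "i < N" for i
    using set1 tv[OF that that] by (simp add: dense_rank_def)
  have toff: "dense_rank N t i j = 2" if "i < N" "j < N" "i \<noteq> j" for i j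
    using set0 tv[OF that(1,2)] that(3) by (simp add: dense_rank_def)
  define c where "c = g 1 0"
  define d where "d = g 0 0"
  have N1: "1 < N" using assms(1) by simp
  have gc: "g i j = c" if "i < N" "j < N" "i \<noteq> j" for i j
    unfolding c_def using N1 that
    by (intro dense_rank_inj[of _ N _ _ _]) (auto simp: dr toff)
  have gd: "g i i = d" if "i < N" for i
    unfolding d_def using N1 that
    by (intro dense_rank_inj[of _ N _ _ _]) (auto simp: dr tdiag)
  have cd: "c \<noteq> d"
  proof
    assume "c = d"
    then have "g 1 0 = g 0 0" by (simp add: c_def d_def)
    then have "dense_rank N g 1 0 = dense_rank N g 0 0" by (simp add: dense_rank_def)
    then show False using N1 dr[of 1 0] dr[of 0 0] toff[of 1 0] tdiag[of 0] by simp
  qed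
  have gform: "g i j = (\<Sum>p<r. A i p * (\<Sum>q<r. R 0 p q * A j q))" if "i < N" "j < N" for i j
    using that K0 by (simp add: g_def SA bilinear_tensor_def sum_distrib_left mult.assoc)
  obtain x where x: "\<exists>i\<in>{..<N-1}. x i \<noteq> 0"
      "\<forall>p<r. (\<Sum>i\<in>{..<N-1}. A i p * x i) = 0"
    using lin_dep[of "{..<N-1}" r "\<lambda>p i. A i p"] rN by auto
  have key: "(\<Sum>i<N-1. x i * g i j) = 0" if "j < N" for j
  proof -
    have "(\<Sum>i<N-1. x i * g i j) = (\<Sum>i<N-1. x i * (\<Sum>p<r. A i p * (\<Sum>q<r. R 0 p q * A j q)))"
      using that by (intro sum.cong) (auto simp: gform)
    also have "\<dots> = (\<Sum>p<r. (\<Sum>i<N-1. A i p * x i) * (\<Sum>q<r. R 0 p q * A j q))"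
      by (simp add: sum_distrib_left sum_distrib_right mult_ac) (rule sum.swap)
    also have "\<dots> = 0" using x(2) by simp
    finally show ?thesis .
  qed
  have g2: "g i j = c + (if i = j then d - c else 0)" if "i < N" "j < N" for i j
    using gc gd that by auto
  have sx: "c * (\<Sum>i<N-1. x i) = 0"
  proof -
    have "(\<Sum>i<N-1. x i * g i (N-1)) = (\<Sum>i<N-1. x i * c)"
      using N1 by (intro sum.cong) (auto simp: g2)
    then show ?thesis using key[of "N-1"] N1 by (simp add: sum_distrib_left mult.commute)
  qed
  have "x j = 0" if "j < N - 1" for j
  proof -
    have "(\<Sum>i<N-1. x i * g i j) = (\<Sum>i<N-1. x i * c + (if i = j then x i * (d - c) else 0))"
      using that by (intro sum.cong) (auto simp: g2 algebra_simps)
    also have "\<dots> = c * (\<Sum>i<N-1. x i) + x j * (d - c)"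
      using that by (simp add: sum.distrib sum_distrib_left mult.commute)
    finally have "x j * (d - c) = 0" using key[of j] sx that by auto
    then show ?thesis using cd by simp
  qed
  then show False using x(1) by auto
qed

end
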